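(* For every positive integer $n$, the number of circular permutations of $[n]=\{1,2,\ldots,n\}$ that avoid the pattern $1234$ equals $2^{n}+1-2n-\binom{n}{3}$.
   Context: A circular permutation of $[n]$ is an arrangement of $1,2,\ldots,n$ clockwise around a circle, two arrangements being identified if they differ by a rotation. Equivalently, it can be represented uniquely as a linear permutation $\pi_1\pi_2\cdots\pi_n$ of $[n]$ with $\pi_n=n$, whose rotations all represent the same circular permutation. The reduced form of a sequence of distinct positive integers is obtained by replacing its smallest entry by $1$, its next smallest by $2$, and so on; a pattern is such a reduced form. An occurrence of a pattern $\tau$ of length $m$ in a circular permutation $\pi$ is a sequence of $m$ letters of $\pi$ read in clockwise order and lying within one revolution (i.e., a subsequence of some rotation of the linear representation) whose reduced form is $\tau$; $\pi$ avoids $\tau$ if it has no occurrence of $\tau$. Here $\binom{n}{3}=0$ for $n<3$. *)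

theory Defs
  imports Main
begin

definition reduced_form :: "nat list \<Rightarrow> nat list" where
  "reduced_form xs = map (\<lambda>x. card {y \<in> set xs. y \<le> x}) xs"

text \<open>Circular permutations of [n], represented uniquely by linear permutations
  pi_1 ... pi_n of 1..n with pi_n = n.\<close>
definition circ_perms :: "nat \<Rightarrow> nat list set" where
  "circ_perms n = {\<pi>. distinct \<pi> \<and> set \<pi> = {1..n} \<and> last \<pi> = n}"

definition circ_occurs :: "nat list \<Rightarrow> nat list \<Rightarrow> bool" where
  "circ_occurs \<tau> \<pi> \<longleftrightarrow> (\<exists>k ys. ys \<in> set (subseqs (rotate k \<pi>)) \<and> reduced_form ys = \<tau>)"

definition circ_avoids :: "nat list \<Rightarrow> nat list \<Rightarrow> bool" where
  "circ_avoids \<tau> \<pi> \<longleftrightarrow> \<not> circ_occurs \<tau> \<pi>"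

end

theory Submission
  imports Defs "HOL-Library.Sublist"
begin

definition c123 :: "nat list \<Rightarrow> bool" where
  "c123 s \<longleftrightarrow> (\<exists>a b c. subseq [a,b,c] s \<and> a < b \<and> b < c)"

definition c3412 :: "nat list \<Rightarrow> bool" where
  "c3412 s \<longleftrightarrow> (\<exists>a b c d. subseq [c,d,a,b] s \<and> a < b \<and> b < c \<and> c < d)"

lemma card_le_mono_rf:
  assumes "finite S" "x \<le> y"
  shows "card {z \<in> S. z \<le> x} \<le> card {z \<in> S. (z::nat) \<le> y}"
  by (rule card_mono) (use assms in auto)

lemma len4: "length ys = 4 \<Longrightarrow> \<exists>a b c d. ys = [a,b,c,d]"
  by (simp add: length_Suc_conv numeral_eq_Suc) blast

lemma rf4:
  "reduced_form ys = [1,2,3,4] \<longleftrightarrow> (\<exists>a b c d. ys = [a,b,c,d] \<and> a < b \<and> b < c \<and> c < d)"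
proof
  assume h: "reduced_form ys = [1,2,3,4]"
  then have "length ys = 4" using arg_cong[of _ _ length] by (fastforce simp add: reduced_form_def)
  then obtain a b c d where ys: "ys = [a,b,c,d]" using len4 by blast
  define f where "f x = card {y \<in> set ys. y \<le> x}" for x
  have fa: "f a = 1" "f b = 2" "f c = 3" "f d = 4" using h unfolding ys reduced_form_def f_def by simp_all
  have mono: "x \<le> y \<Longrightarrow> f x \<le> f y" for x y unfolding f_def by (rule card_le_mono_rf) auto
  have "a < b" using mono[of b a] fa by (cases "b \<le> a") auto
  moreover have "b < c" using mono[of c b] fa by (cases "c \<le> b") auto
  moreover have "c < d" using mono[of d c] fa by (cases "d \<le> c") auto
  ultimately show "\<exists>a b c d. ys = [a,b,c,d] \<and> a < b \<and> b < c \<and> c < d" using ys by blast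
next
  assume "\<exists>a b c d. ys = [a,b,c,d] \<and> a < b \<and> b < c \<and> c < d"
  then obtain a b c d where ys: "ys = [a,b,c,d]" and o: "a < b" "b < c" "c < d" by blast
  have 1: "{y \<in> set [a,b,c,d]. y \<le> a} = {a}" using o by auto
  have 2: "{y \<in> set [a,b,c,d]. y \<le> b} = {a,b}" using o by auto
  have 3: "{y \<in> set [a,b,c,d]. y \<le> c} = {a,b,c}" using o by auto
  have 4: "{y \<in> set [a,b,c,d]. y \<le> d} = {a,b,c,d}" using o by auto
  show "reduced_form ys = [1,2,3,4]" unfolding ys reduced_form_def list.map 1 2 3 4 using o
    by simp
qed

lemma circ_occ_iff:
  "circ_occurs [1,2,3,4] p \<longleftrightarrow> (\<exists>k a b c d. subseq [a,b,c,d] (rotate k p) \<and> a < b \<and> b < c \<and> c < d)"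
  unfolding circ_occurs_def in_set_subseqs rf4 by (intro iffI; elim exE conjE; blast)

lemma subseq_snoc_cases:
  assumes "subseq w (s @ [n])"
  shows "subseq w s \<or> (\<exists>w'. w = w' @ [n] \<and> subseq w' s)"
proof -
  from assms obtain w1 w2 where "w = w1 @ w2" "subseq w1 s" "subseq w2 [n]"
    by (rule subseq_appendE)
  moreover have "w2 = [] \<or> w2 = [n]" using \<open>subseq w2 [n]\<close>
    by (metis list_emb_Nil2 subseq_Cons2_iff subseq_same_length list_emb_length length_Cons list.size(3) le_SucE le_zero_eq length_0_conv)
  ultimately show ?thesis by auto
qed

lemma subseq_set: "subseq w s \<Longrightarrow> set w \<subseteq> set s"
  by (induction rule: list_emb.induct) auto

lemma split4:
  assumes "[a,b,c,d] = xs1 @ (xs2::nat list)"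
  shows "xs2 @ xs1 = [a,b,c,d] \<or> xs2 @ xs1 = [b,c,d,a] \<or> xs2 @ xs1 = [c,d,a,b] \<or> xs2 @ xs1 = [d,a,b,c]"
proof -
  have l: "length xs1 \<le> 4" using arg_cong[OF assms, of length] by simp
  have x1: "xs1 = take (length xs1) [a,b,c,d]" and x2: "xs2 = drop (length xs1) [a,b,c,d]"
    using assms by (metis append_eq_conv_conj)+
  have "length xs1 = 0 \<or> length xs1 = 1 \<or> length xs1 = 2 \<or> length xs1 = 3 \<or> length xs1 = 4" using l by linarith
  then show ?thesis
    apply (elim disjE)
    apply (subst x1, subst x2, simp)+
    done
qed

lemma rot_reduce:
  assumes lt: "\<forall>x\<in>set s. x < n"
  shows "(\<exists>k a b c d. subseq [a,b,c,d] (rotate k (s @ [n])) \<and> a < b \<and> b < c \<and> c < d)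
         \<longleftrightarrow> c123 s \<or> c3412 s"
proof
  assume "\<exists>k a b c d. subseq [a,b,c,d] (rotate k (s @ [n])) \<and> a < b \<and> b < c \<and> c < d"
  then obtain k a b c d where sub: "subseq [a,b,c,d] (rotate k (s @ [n]))" and o: "a < b" "b < c" "c < d"
    by blast
  define r where "r = k mod length (s @ [n])"
  have eqr: "rotate k (s @ [n]) = drop r (s @ [n]) @ take r (s @ [n])"
    unfolding r_def by (rule rotate_drop_take)
  from sub[unfolded eqr] obtain xs1 xs2 where sp: "[a,b,c,d] = xs1 @ xs2" "subseq xs1 (drop r (s @ [n]))"
      "subseq xs2 (take r (s @ [n]))"
    by (rule subseq_appendE)
  have "subseq (xs2 @ xs1) (take r (s @ [n]) @ drop r (s @ [n]))"
    using sp by (intro list_emb_append_mono) auto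
  then have w: "subseq (xs2 @ xs1) (s @ [n])" by (simp only: append_take_drop_id)
  have sub3: "subseq [x,y,z] [x,y,z,u]" "subseq [y,z,u] [x,y,z,u]" "subseq [x,y,z] [u,x,y,z]"
    for x y z u :: nat by (simp, (rule list_emb_Cons, simp)+)
  from split4[OF sp(1)] show "c123 s \<or> c3412 s"
  proof (elim disjE)
    assume e: "xs2 @ xs1 = [a,b,c,d]"
    from subseq_snoc_cases[OF w[unfolded e]] show ?thesis
    proof
      assume "subseq [a,b,c,d] s"
      then have "subseq [a,b,c] s" using sub3(1) subseq_order.trans by blast
      then show ?thesis using o unfolding c123_def by blast
    next
      assume "\<exists>w'. [a,b,c,d] = w' @ [n] \<and> subseq w' s"
      then obtain w' where "[a,b,c,d] = w' @ [n]" "subseq w' s" by blast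
      then have "w' = butlast [a,b,c,d]" by simp
      then have "w' = [a,b,c]" by simp
      then show ?thesis using o \<open>subseq w' s\<close> unfolding c123_def by blast
    qed
  next
    assume e: "xs2 @ xs1 = [b,c,d,a]"
    from subseq_snoc_cases[OF w[unfolded e]] show ?thesis
    proof
      assume "subseq [b,c,d,a] s"
      then have "subseq [b,c,d] s" using sub3(1) subseq_order.trans by blast
      then show ?thesis using o unfolding c123_def by blast
    next
      assume "\<exists>w'. [b,c,d,a] = w' @ [n] \<and> subseq w' s"
      then obtain w' where eq: "[b,c,d,a] = w' @ [n]" "subseq w' s" by blast
      have "w' = butlast [b,c,d,a]" "n = last [b,c,d,a]" by (simp_all add: eq)
      then have "w' = [b,c,d]" "a = n" by simp_all
      then have "b < n" using lt subseq_set[OF \<open>subseq w' s\<close>] by auto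
      then show ?thesis using o \<open>a = n\<close> by simp
    qed
  next
    assume e: "xs2 @ xs1 = [c,d,a,b]"
    from subseq_snoc_cases[OF w[unfolded e]] show ?thesis
    proof
      assume "subseq [c,d,a,b] s"
      then show ?thesis using o unfolding c3412_def by blast
    next
      assume "\<exists>w'. [c,d,a,b] = w' @ [n] \<and> subseq w' s"
      then obtain w' where eq: "[c,d,a,b] = w' @ [n]" "subseq w' s" by blast
      have "w' = butlast [c,d,a,b]" "n = last [c,d,a,b]" by (simp_all add: eq)
      then have "w' = [c,d,a]" "b = n" by simp_all
      then have "c < n" using lt subseq_set[OF \<open>subseq w' s\<close>] by auto
      then show ?thesis using o \<open>b = n\<close> by simp
    qed
  next
    assume e: "xs2 @ xs1 = [d,a,b,c]"
    from subseq_snoc_cases[OF w[unfolded e]] show ?thesis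
    proof
      assume "subseq [d,a,b,c] s"
      then have "subseq [a,b,c] s" using sub3(3) subseq_order.trans by blast
      then show ?thesis using o unfolding c123_def by blast
    next
      assume "\<exists>w'. [d,a,b,c] = w' @ [n] \<and> subseq w' s"
      then obtain w' where eq: "[d,a,b,c] = w' @ [n]" "subseq w' s" by blast
      have "w' = butlast [d,a,b,c]" "n = last [d,a,b,c]" by (simp_all add: eq)
      then have "w' = [d,a,b]" "c = n" by simp_all
      then have "d < n" using lt subseq_set[OF \<open>subseq w' s\<close>] by auto
      then show ?thesis using o \<open>c = n\<close> by simp
    qed
  qed
next
  assume "c123 s \<or> c3412 s"
  then show "\<exists>k a b c d. subseq [a,b,c,d] (rotate k (s @ [n])) \<and> a < b \<and> b < c \<and> c < d"
  proof
    assume "c123 s"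
    then obtain a b c where h: "subseq [a,b,c] s" "a < b" "b < c" unfolding c123_def by blast
    then have "c < n" using lt subseq_set[OF h(1)] by auto
    have "subseq ([a,b,c] @ [n]) (s @ [n])" using h(1) by (intro list_emb_append_mono) auto
    then have "subseq [a,b,c,n] (rotate 0 (s @ [n]))" by simp
    then show ?thesis using h \<open>c < n\<close> by blast
  next
    assume "c3412 s"
    then obtain a b c d where h: "subseq ([c,d] @ [a,b]) s" "a < b" "b < c" "c < d"
      unfolding c3412_def by auto
    from list_emb_appendD[OF h(1)] obtain us vs where uv: "s = us @ vs" "subseq [c,d] us" "subseq [a,b] vs"
      by blast
    have "rotate (length us) (s @ [n]) = (vs @ [n]) @ us"
      unfolding uv(1) by (metis append_assoc rotate_append)
    moreover have "subseq ([a,b] @ [c,d]) ((vs @ [n]) @ us)"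
      using uv by (intro list_emb_append_mono) auto
    ultimately have "subseq [a,b,c,d] (rotate (length us) (s @ [n]))" by simp
    then show ?thesis using h by blast
  qed
qed

abbreviation dec :: "nat list \<Rightarrow> bool" where
  "dec xs \<equiv> sorted_wrt (>) xs"

definition decl :: "nat set \<Rightarrow> nat list" where
  "decl A = rev (sorted_list_of_set A)"

lemma decl_props:
  assumes "finite A"
  shows "dec (decl A)" "set (decl A) = A" "distinct (decl A)"
  using assms by (auto simp: decl_def sorted_wrt_rev)

lemma dec_distinct: "dec xs \<Longrightarrow> distinct xs"
  by (metis distinct_rev sorted_wrt_rev strict_sorted_iff)

lemma dec_unique:
  assumes "dec xs" "set xs = A"
  shows "xs = decl A"
proof -
  have fA: "finite A" using assms(2) by auto
  have "sorted_wrt (<) (rev xs)" using assms(1) by (simp add: sorted_wrt_rev)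
  moreover have "sorted_wrt (<) (sorted_list_of_set A)" by simp
  moreover have "set (rev xs) = set (sorted_list_of_set A)" using assms(2) fA by simp
  ultimately have "rev xs = sorted_list_of_set A" using strict_sorted_equal by metis
  then show ?thesis unfolding decl_def by (metis rev_rev_ident)
qed

lemma sorted_wrt_subseq: "subseq ys xs \<Longrightarrow> sorted_wrt R xs \<Longrightarrow> sorted_wrt R ys"
proof (induction rule: list_emb.induct)
  case (list_emb_Cons2 x y xs ys)
  then show ?case by (auto dest: subseq_set)
qed auto

lemma dec_pair: "dec xs \<Longrightarrow> subseq [x,y] xs \<Longrightarrow> y < x"
  using sorted_wrt_subseq[of "[x,y]" xs "(>)"] by simp

lemma notdec: "\<not> sorted_wrt R xs \<Longrightarrow> \<exists>x y. subseq [x,y] xs \<and> \<not> R x y"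
proof (induction xs)
  case Nil then show ?case by simp
next
  case (Cons z zs)
  show ?case
  proof (cases "\<forall>y\<in>set zs. R z y")
    case True
    then have "\<not> sorted_wrt R zs" using Cons.prems by simp
    then show ?thesis using Cons.IH by (meson list_emb_Cons)
  next
    case False
    then obtain y where "y \<in> set zs" "\<not> R z y" by blast
    then have "subseq [z,y] (z # zs)" by (simp add: subseq_singleton_left)
    then show ?thesis using \<open>\<not> R z y\<close> by blast
  qed
qed

lemma asc_mid:
  "subseq [x,y] xs \<Longrightarrow> z \<in> set xs \<Longrightarrow> z \<noteq> x \<Longrightarrow> z \<noteq> y \<Longrightarrow> subseq [z,y] xs \<or> subseq [x,z] xs"
proof (induction xs)
  case Nil then show ?case by simp
next
  case (Cons w ws)
  show ?case
  proof (cases "w = x")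
    case True
    then have "y \<in> set ws" "z \<in> set ws" using Cons.prems by (auto simp: subseq_singleton_left)
    then show ?thesis using True by (simp add: subseq_singleton_left)
  next
    case False
    then have ws: "subseq [x,y] ws" using Cons.prems by simp
    show ?thesis
    proof (cases "w = z")
      case True
      have "y \<in> set ws" using ws subseq_set by fastforce
      then show ?thesis using True by (simp add: subseq_singleton_left)
    next
      case False
      then have "z \<in> set ws" using Cons.prems by simp
      then show ?thesis using Cons.IH ws Cons.prems by (meson list_emb_Cons)
    qed
  qed
qed

lemma subseq_take: "subseq (take k xs) xs"
  by (metis append_take_drop_id subseq_rev_drop_many subseq_order.order_refl)

lemma subseq_drop: "subseq (drop k xs) xs"
  by (metis append_take_drop_id subseq_drop_many subseq_order.order_refl)

lemma split_pref_suf: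
  assumes "w = xs1 @ xs2" "subseq xs1 a" "subseq xs2 g"
  shows "length xs1 \<ge> k \<Longrightarrow> subseq (take k w) a"
    and "length xs1 \<le> j \<Longrightarrow> subseq (drop j w) g"
proof -
  assume "length xs1 \<ge> k"
  then have "take k w = take k xs1" using assms(1) by simp
  then show "subseq (take k w) a" using subseq_take assms(2) subseq_order.trans by metis
next
  assume "length xs1 \<le> j"
  then have "drop j w = drop (j - length xs1) xs2" using assms(1) by simp
  then show "subseq (drop j w) g" using subseq_drop assms(3) subseq_order.trans by metis
qed

lemma twodec_avoid:
  assumes "dec a" "dec g"
  shows "\<not> c123 (a @ g)" "\<not> c3412 (a @ g)"
proof -
  show "\<not> c123 (a @ g)"
  proof
    assume "c123 (a @ g)"
    then obtain x y z where h: "subseq [x,y,z] (a @ g)" "x < y" "y < z" unfolding c123_def by blast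
    from h(1) obtain xs1 xs2 where sp: "[x,y,z] = xs1 @ xs2" "subseq xs1 a" "subseq xs2 g"
      by (rule subseq_appendE)
    show False
    proof (cases "length xs1 \<ge> 2")
      case True
      then have "subseq [x,y] a" using split_pref_suf(1)[OF sp, of 2] by simp
      then show False using dec_pair[OF assms(1)] h by fastforce
    next
      case False
      then have "subseq [y,z] g" using split_pref_suf(2)[OF sp, of 1] by simp
      then show False using dec_pair[OF assms(2)] h by fastforce
    qed
  qed
  show "\<not> c3412 (a @ g)"
  proof
    assume "c3412 (a @ g)"
    then obtain x y z u where h: "subseq [z,u,x,y] (a @ g)" "x < y" "y < z" "z < u" unfolding c3412_def by blast
    from h(1) obtain xs1 xs2 where sp: "[z,u,x,y] = xs1 @ xs2" "subseq xs1 a" "subseq xs2 g"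
      by (rule subseq_appendE)
    show False
    proof (cases "length xs1 \<ge> 2")
      case True
      then have "subseq [z,u] a" using split_pref_suf(1)[OF sp, of 2] by simp
      then show False using dec_pair[OF assms(1)] h by fastforce
    next
      case False
      then have "subseq [x,y] g" using split_pref_suf(2)[OF sp, of 2] by simp
      then show False using dec_pair[OF assms(2)] h by fastforce
    qed
  qed
qed

lemma split2:
  assumes "subseq [x,y] (a @ g)"
  shows "subseq [x,y] a \<or> (x \<in> set a \<and> y \<in> set g) \<or> subseq [x,y] g"
proof -
  from assms obtain xs1 xs2 where sp: "[x,y] = xs1 @ xs2" "subseq xs1 a" "subseq xs2 g"
    by (rule subseq_appendE)
  then have "xs1 = [] \<or> xs1 = [x] \<or> xs1 = [x,y]"
    by (cases xs1) (auto simp: Cons_eq_append_conv)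
  then show ?thesis using sp by (auto simp: subseq_singleton_left)
qed

lemma sub123_pairs: "subseq [a,b,c] s \<Longrightarrow> subseq [a,b] s \<and> subseq [b,c] s"
proof -
  assume h: "subseq [a,b,c] s"
  have "subseq [a,b] [a,b,c]" by simp
  moreover have "subseq [b,c] [a,b,c]" by (rule list_emb_Cons) simp
  ultimately show ?thesis using h subseq_order.trans by blast
qed

lemma sub3412_pairs: "subseq [c,d,a,b] s \<Longrightarrow> subseq [c,d] s \<and> subseq [a,b] s"
proof -
  assume h: "subseq [c,d,a,b] s"
  have "subseq [c,d] [c,d,a,b]" by simp
  moreover have "subseq [a,b] [c,d,a,b]" by (rule list_emb_Cons, rule list_emb_Cons) simp
  ultimately show ?thesis using h subseq_order.trans by blast
qed

definition Av :: "nat \<Rightarrow> nat list set" where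
  "Av m = {s. distinct s \<and> set s = {1..m} \<and> \<not> c123 s \<and> \<not> c3412 s}"

definition Sd :: "nat \<Rightarrow> nat list set" where
  "Sd m = {a @ m # b | a b. a \<noteq> [] \<and> dec a \<and> dec b \<and> set a \<union> set b = {1..<m} \<and> set a \<inter> set b = {}}"

definition Sh :: "nat set \<Rightarrow> nat set \<Rightarrow> nat list set" where
  "Sh L H = {b. distinct b \<and> set b = L \<union> H \<and> dec (filter (\<lambda>x. x \<in> L) b) \<and> dec (filter (\<lambda>x. x \<in> H) b)}"

definition Ssp :: "nat \<Rightarrow> nat list set" where
  "Ssp m = (\<Union>(q,l) \<in> Sigma {..<m-1} (\<lambda>q. {..q}).
      (\<lambda>b. decl {l+1..<m-q+l} @ m # b) ` (Sh {1..l} {m-q+l..<m} - {b. dec b}))"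

lemma pair_distinct: "subseq [x,y] xs \<Longrightarrow> distinct xs \<Longrightarrow> x \<noteq> y"
  using subseqs_distinctD[of "[x,y]" xs] by simp

lemma av_struct_sub:
  assumes m: "m \<ge> 1" and sA: "s \<in> Av m"
  shows "s \<in> Cons m ` Av (m-1) \<union> Sd m \<union> Ssp m"
proof -
  have dist: "distinct s" and sets: "set s = {1..m}" and n123: "\<not> c123 s" and n3412: "\<not> c3412 s"
    using sA unfolding Av_def by auto
  have "m \<in> set s" using sets m by auto
  then obtain a b where s: "s = a @ m # b" using split_list by metis
  have mA: "m \<notin> set a" "m \<notin> set b" and dab: "set a \<inter> set b = {}" and da: "distinct a" and db: "distinct b"
    using dist unfolding s by auto
  have sab: "set a \<union> set b = {1..<m}"
  proof -
    have "set a \<union> set b \<union> {m} = {1..m}" using sets unfolding s by auto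
    then have "set a \<union> set b = {1..m} - {m}" using mA by blast
    also have "\<dots> = {1..<m}" by auto
    finally show ?thesis .
  qed
  show ?thesis
  proof (cases "a = []")
    case True
    have "b \<in> Av (m-1)"
    proof -
      have "{1..<m} = {1..m-1}" using m by (cases m) (simp_all add: atLeastLessThanSuc_atLeastAtMost)
      then have "set b = {1..m-1}" using sab True by simp
      moreover have "\<not> c123 b" using n123 unfolding s True c123_def by (simp only: append_Nil) (meson list_emb_Cons)
      moreover have "\<not> c3412 b" using n3412 unfolding s True c3412_def by (simp only: append_Nil) (meson list_emb_Cons)
      ultimately show ?thesis using db unfolding Av_def by auto
    qed
    then show ?thesis unfolding s True by auto
  next
    case anz: False
    have deca: "dec a"
    proof (rule ccontr)
      assume "\<not> dec a"
      then obtain x y where xy: "subseq [x,y] a" "\<not> y < x" using notdec by blast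
      have "x \<noteq> y" using pair_distinct[OF xy(1) da] .
      then have "x < y" using xy(2) by simp
      have "y \<in> set a" using subseq_set[OF xy(1)] by auto
      then have "y < m" using sab by auto
      have "subseq ([x,y] @ [m]) (a @ (m # b))" using xy(1) by (intro list_emb_append_mono) auto
      then have "c123 s" unfolding s c123_def using \<open>x < y\<close> \<open>y < m\<close> by auto
      then show False using n123 by simp
    qed
    define lo where "lo = Min (set a)"
    define hi where "hi = Max (set a)"
    have lohi: "lo \<in> set a" "hi \<in> set a" "\<And>x. x \<in> set a \<Longrightarrow> lo \<le> x \<and> x \<le> hi"
      using anz unfolding lo_def hi_def by auto
    have lo1: "1 \<le> lo" and him: "hi < m" using lohi sab by auto
    have F1: "x < lo \<and> hi < y" if xy: "subseq [x,y] b" "x < y" for x y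
    proof
      have xb: "x \<in> set b" "y \<in> set b" using subseq_set[OF xy(1)] by auto
      show "x < lo"
      proof (rule ccontr)
        assume "\<not> x < lo"
        moreover have "x \<noteq> lo" using xb lohi dab by auto
        ultimately have "lo < x" by simp
        have "subseq [x,y] (m # b)" using xy(1) by (rule list_emb_Cons)
        moreover have "subseq [lo] a" using lohi by (simp add: subseq_singleton_left)
        ultimately have "subseq ([lo] @ [x,y]) (a @ (m # b))"
          by (intro list_emb_append_mono)
        then have "c123 s" unfolding s c123_def using \<open>lo < x\<close> xy(2) by auto
        then show False using n123 by simp
      qed
      show "hi < y"
      proof (rule ccontr)
        assume "\<not> hi < y"
        moreover have "y \<noteq> hi" using xb lohi dab by auto
        ultimately have "y < hi" by simp
        have "subseq [m,x,y] (m # b)" using xy(1) by (rule subseq_Cons2)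
        moreover have "subseq [hi] a" using lohi by (simp add: subseq_singleton_left)
        ultimately have "subseq ([hi] @ [m,x,y]) (a @ (m # b))"
          by (intro list_emb_append_mono)
        then have "c3412 s" unfolding s c3412_def using \<open>y < hi\<close> xy(2) him by auto
        then show False using n3412 by simp
      qed
    qed
    show ?thesis
    proof (cases "dec b")
      case True
      then have "s \<in> Sd m" unfolding Sd_def s using anz deca sab dab by blast
      then show ?thesis by simp
    next
      case ndb: False
      have int: "set a = {lo..hi}"
      proof (rule ccontr)
        assume "set a \<noteq> {lo..hi}"
        moreover have "set a \<subseteq> {lo..hi}" using lohi(3) by auto
        ultimately have "\<not> {lo..hi} \<subseteq> set a" by blast
        then obtain z where z: "lo \<le> z" "z \<le> hi" "z \<notin> set a" unfolding subset_iff atLeastAtMost_iff by blast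
        then have zb: "z \<in> set b" using sab lo1 him by auto
        obtain x y where xy: "subseq [x,y] b" "\<not> y < x" using notdec ndb by blast
        have "x \<noteq> y" using pair_distinct[OF xy(1) db] .
        then have "x < y" using xy(2) by simp
        then have "x < lo" "hi < y" using F1[OF xy(1)] by blast+
        then have "z \<noteq> x" "z \<noteq> y" using z by auto
        from asc_mid[OF xy(1) zb this] show False
        proof
          assume "subseq [z,y] b"
          moreover have "z < y" using z \<open>hi < y\<close> by linarith
          ultimately have "z < lo" using F1 by blast
          then show False using z by linarith
        next
          assume "subseq [x,z] b"
          moreover have "x < z" using z \<open>x < lo\<close> by linarith
          ultimately have "hi < z" using F1 by blast
          then show False using z by linarith
        qed
      qed
      define l where "l = lo - 1"
      define q where "q = m - 1 - (hi - lo + 1)"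
      have lohi2: "lo \<le> hi" using lohi by auto
      have q1: "q < m - 1" "l \<le> q" using lo1 him lohi2 unfolding q_def l_def by auto
      have T: "m - q + l = hi + 1" using lo1 him lohi2 unfolding q_def l_def by auto
      have I1: "{l+1..<m-q+l} = {lo..hi}" unfolding T using lo1 unfolding l_def by auto
      have I2: "{1..l} = {1..<lo}" using lo1 unfolding l_def by auto
      have I3: "{m-q+l..<m} = {hi+1..<m}" unfolding T ..
      have aeq: "a = decl {l+1..<m-q+l}"
        by (rule dec_unique[OF deca]) (subst I1, rule int)
      have setb: "set b = {1..l} \<union> {m-q+l..<m}"
      proof -
        have "set b = {1..<m} - set a" using sab dab by auto
        also have "\<dots> = {1..<lo} \<union> {hi+1..<m}" unfolding int using lo1 him lohi2 by auto
        finally show ?thesis unfolding I2 I3 .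
      qed
      have bSh: "b \<in> Sh {1..l} {m-q+l..<m}"
        unfolding Sh_def
      proof (intro CollectI conjI)
        show "distinct b" by (rule db)
        show "set b = {1..l} \<union> {m-q+l..<m}" by (rule setb)
        show "dec (filter (\<lambda>x. x \<in> {1..l}) b)"
        proof (rule ccontr)
          assume "\<not> dec (filter (\<lambda>x. x \<in> {1..l}) b)"
          then obtain x y where xy: "subseq [x,y] (filter (\<lambda>x. x \<in> {1..l}) b)" "\<not> y < x"
            using notdec by blast
          have xyb: "subseq [x,y] b" using xy(1) subseq_filter_left subseq_order.trans by blast
          have "x \<noteq> y" using pair_distinct[OF xyb db] .
          then have "x < y" using xy(2) by simp
          have "y \<in> {1..l}" using subseq_set[OF xy(1)] by auto
          then show False using F1[OF xyb \<open>x < y\<close>] lohi2 unfolding l_def by auto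
        qed
        show "dec (filter (\<lambda>x. x \<in> {m-q+l..<m}) b)"
        proof (rule ccontr)
          assume "\<not> dec (filter (\<lambda>x. x \<in> {m-q+l..<m}) b)"
          then obtain x y where xy: "subseq [x,y] (filter (\<lambda>x. x \<in> {m-q+l..<m}) b)" "\<not> y < x"
            using notdec by blast
          have xyb: "subseq [x,y] b" using xy(1) subseq_filter_left subseq_order.trans by blast
          have "x \<noteq> y" using pair_distinct[OF xyb db] .
          then have "x < y" using xy(2) by simp
          have "x \<in> {m-q+l..<m}" using subseq_set[OF xy(1)] by auto
          then show False using F1[OF xyb \<open>x < y\<close>] lohi2 T by auto
        qed
      qed
      have "b \<in> Sh {1..l} {m-q+l..<m} - {b. dec b}" using bSh ndb by simp
      then have A: "s \<in> (\<lambda>b. decl {l+1..<m-q+l} @ m # b) ` (Sh {1..l} {m-q+l..<m} - {b. dec b})"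
        unfolding s aeq by (rule imageI)
      have B: "(q,l) \<in> Sigma {..<m-1} (\<lambda>q. {..q})" using q1 by simp
      have "s \<in> Ssp m" unfolding Ssp_def UN_iff
        apply (rule bexI[of _ "(q,l)"])
        using A apply (simp only: prod.case)
        using B apply assumption
        done
      then show ?thesis by simp
    qed
  qed
qed

lemma cons_big:
  fixes m :: nat
  assumes "\<forall>v\<in>set b. v < m" "subseq (x # y # r) (m # b)" "x < y"
  shows "subseq (x # y # r) b"
proof (cases "x = m")
  case True
  then have "subseq (y # r) b" using assms(2) by simp
  then have "y \<in> set b" using subseq_set by fastforce
  then have "y < m" using assms(1) by blast
  then show ?thesis using assms(3) True by simp
next
  case False
  then show ?thesis using assms(2) by simp
qed

lemma lowhigh_avoid:
  assumes "\<And>x y. subseq [x,y] s \<Longrightarrow> x < y \<Longrightarrow> x < T \<and> T \<le> y"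
  shows "\<not> c123 s" "\<not> c3412 s"
proof -
  show "\<not> c123 s"
  proof
    assume "c123 s"
    then obtain x y z where h: "subseq [x,y,z] s" "x < y" "y < z" unfolding c123_def by blast
    from sub123_pairs[OF h(1)] have p: "subseq [x,y] s" "subseq [y,z] s" by auto
    have "T \<le> y" using assms[OF p(1) h(2)] by blast
    moreover have "y < T" using assms[OF p(2) h(3)] by blast
    ultimately show False by simp
  qed
  show "\<not> c3412 s"
  proof
    assume "c3412 s"
    then obtain x y z u where h: "subseq [z,u,x,y] s" "x < y" "y < z" "z < u" unfolding c3412_def by blast
    from sub3412_pairs[OF h(1)] have p: "subseq [z,u] s" "subseq [x,y] s" by auto
    have "z < T" using assms[OF p(1) h(4)] by blast
    moreover have "T \<le> y" using assms[OF p(2) h(2)] by blast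
    ultimately show False using h(3) by simp
  qed
qed

lemma av_cons:
  assumes m: "m \<ge> 1" and bA: "b \<in> Av (m-1)"
  shows "m # b \<in> Av m"
proof -
  have db: "distinct b" and sb: "set b = {1..m-1}" and n: "\<not> c123 b" "\<not> c3412 b"
    using bA unfolding Av_def by auto
  have lt: "\<forall>v\<in>set b. v < m" using sb m by auto
  have "distinct (m # b)" using db lt by auto
  moreover have "set (m # b) = {1..m}" using sb m by auto
  moreover have "\<not> c123 (m # b)"
  proof
    assume "c123 (m # b)"
    then obtain x y z where h: "subseq [x,y,z] (m # b)" "x < y" "y < z" unfolding c123_def by blast
    have "subseq [x,y,z] b" using cons_big[OF lt h(1) h(2)] .
    then show False using n h unfolding c123_def by blast
  qed
  moreover have "\<not> c3412 (m # b)"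
  proof
    assume "c3412 (m # b)"
    then obtain x y z u where h: "subseq [z,u,x,y] (m # b)" "x < y" "y < z" "z < u" unfolding c3412_def by blast
    have "subseq [z,u,x,y] b" using cons_big[OF lt h(1) h(4)] .
    then show False using n h unfolding c3412_def by blast
  qed
  ultimately show ?thesis unfolding Av_def by blast
qed

lemma av_Sd:
  assumes sS: "s \<in> Sd m"
  shows "s \<in> Av m"
proof -
  obtain a b where s: "s = a @ m # b" and h: "a \<noteq> []" "dec a" "dec b" "set a \<union> set b = {1..<m}"
    "set a \<inter> set b = {}" using sS unfolding Sd_def by blast
  have lt: "\<forall>v\<in>set b. v < m" using h(4) by auto
  have decmb: "dec (m # b)" using h(3) lt by simp
  have "distinct s" unfolding s using dec_distinct[OF h(2)] dec_distinct[OF decmb] h(4,5) by auto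
  moreover have "set s = {1..m}"
  proof -
    have "set s = set a \<union> set b \<union> {m}" unfolding s by auto
    also have "\<dots> = {1..<m} \<union> {m}" using h(4) by simp
    also have "\<dots> = {1..m}"
    proof -
      obtain v where "v \<in> set a" using h(1) by (cases a) auto
      then have "v \<in> {1..<m}" using h(4) by blast
      then have "1 \<le> m" by simp
      then show ?thesis by auto
    qed
    finally show ?thesis .
  qed
  moreover have "\<not> c123 s" "\<not> c3412 s" unfolding s using twodec_avoid[OF h(2) decmb] by auto
  ultimately show ?thesis unfolding Av_def by blast
qed

lemma av_Ssp:
  assumes sS: "s \<in> Ssp m"
  shows "s \<in> Av m"
proof -
  obtain q l b where ql: "q < m - 1" "l \<le> q" and bS: "b \<in> Sh {1..l} {m-q+l..<m}"
    and s: "s = decl {l+1..<m-q+l} @ m # b"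
    using sS unfolding Ssp_def by auto
  define T where "T = m - q + l"
  define a where "a = decl {l+1..<T}"
  have T1: "l + 1 < T" "T \<le> m" using ql unfolding T_def by auto
  have s': "s = a @ m # b" unfolding s a_def T_def ..
  have deca: "dec a" and seta: "set a = {l+1..<T}" and da: "distinct a"
    unfolding a_def using decl_props[of "{l+1..<T}"] by auto
  have db: "distinct b" and setb: "set b = {1..l} \<union> {T..<m}"
    and dL: "dec (filter (\<lambda>x. x \<in> {1..l}) b)" and dH: "dec (filter (\<lambda>x. x \<in> {T..<m}) b)"
    using bS unfolding Sh_def T_def by auto
  have lt: "\<forall>v\<in>set b. v < m" using setb T1 by auto
  have key: "x < T \<and> T \<le> y" if xy: "subseq [x,y] s" "x < y" for x y
  proof -
    from split2[OF xy(1)[unfolded s']]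
    show ?thesis
    proof (elim disjE)
      assume "subseq [x,y] a"
      then have "y < x" using dec_pair[OF deca] by blast
      then show ?thesis using xy(2) by simp
    next
      assume h: "x \<in> set a \<and> y \<in> set (m # b)"
      then have "x < T" "l + 1 \<le> x" using seta by auto
      moreover have "T \<le> y"
      proof (cases "y = m")
        case True then show ?thesis using T1 by simp
      next
        case False
        then have "y \<in> {1..l} \<union> {T..<m}" using h setb by auto
        moreover have "\<not> y \<le> l" using \<open>l + 1 \<le> x\<close> xy(2) by linarith
        ultimately show ?thesis by auto
      qed
      ultimately show ?thesis by simp
    next
      assume "subseq [x,y] (m # b)"
      then have xyb: "subseq [x,y] b" using cons_big[OF lt _ xy(2)] by blast
      then have xy_in: "x \<in> set b" "y \<in> set b" using subseq_set by fastforce+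
      show ?thesis
      proof (cases "y \<le> l")
        case True
        then have "x \<le> l" using xy(2) by simp
        then have "x \<in> {1..l}" "y \<in> {1..l}" using xy_in setb True T1 by auto
        then have "subseq (filter (\<lambda>x. x \<in> {1..l}) [x,y]) (filter (\<lambda>x. x \<in> {1..l}) b)"
          using subseq_filter[OF xyb] by blast
        then have "subseq [x,y] (filter (\<lambda>x. x \<in> {1..l}) b)" using \<open>x \<in> {1..l}\<close> \<open>y \<in> {1..l}\<close> by simp
        then have "y < x" using dec_pair[OF dL] by blast
        then show ?thesis using xy(2) by simp
      next
        case False
        then have yH: "y \<in> {T..<m}" using xy_in setb by auto
        show ?thesis
        proof (cases "x \<in> {T..<m}")
          case True
          then have "subseq (filter (\<lambda>x. x \<in> {T..<m}) [x,y]) (filter (\<lambda>x. x \<in> {T..<m}) b)"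
            using subseq_filter[OF xyb] by blast
          then have "subseq [x,y] (filter (\<lambda>x. x \<in> {T..<m}) b)" using True yH by simp
          then have "y < x" using dec_pair[OF dH] by blast
          then show ?thesis using xy(2) by simp
        next
          case False
          then have "x \<le> l" using xy_in setb by auto
          then show ?thesis using yH T1 by auto
        qed
      qed
    qed
  qed
  have "\<not> c123 s" "\<not> c3412 s" using lowhigh_avoid[of s T] key by blast+
  moreover have "distinct s"
  proof -
    have "set a \<inter> set b = {}" using seta setb by auto
    moreover have "m \<notin> set a" "m \<notin> set b" using seta setb T1 by auto
    ultimately show ?thesis unfolding s' using da db by auto
  qed
  moreover have "set s = {1..m}"
  proof -
    have "set s = {l+1..<T} \<union> {m} \<union> ({1..l} \<union> {T..<m})" unfolding s' using seta setb by auto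
    also have "\<dots> = {1..m}" using T1 by auto
    finally show ?thesis .
  qed
  ultimately show ?thesis unfolding Av_def by blast
qed

lemma Sh_finite:
  assumes "finite L" "finite H"
  shows "finite (Sh L H)"
proof -
  have "Sh L H \<subseteq> {b. set b \<subseteq> L \<union> H \<and> length b = card (L \<union> H)}"
    unfolding Sh_def by (auto dest: distinct_card)
  moreover have "finite {b. set b \<subseteq> L \<union> H \<and> length b = card (L \<union> H)}"
    using assms by (intro finite_lists_length_eq) auto
  ultimately show ?thesis by (rule finite_subset)
qed

lemma Sh_Nil: "[] \<in> Sh L H \<longleftrightarrow> L = {} \<and> H = {}"
  unfolding Sh_def by auto

lemma Sh_Cons:
  assumes fin: "finite L" "finite H" and dis: "L \<inter> H = {}"
  shows "x # b \<in> Sh L H \<longleftrightarrow>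
    (L \<noteq> {} \<and> x = Max L \<and> b \<in> Sh (L - {x}) H) \<or> (H \<noteq> {} \<and> x = Max H \<and> b \<in> Sh L (H - {x}))"
proof
  assume h: "x # b \<in> Sh L H"
  then have d: "distinct (x # b)" and st: "set (x # b) = L \<union> H"
    and dL: "dec (filter (\<lambda>v. v \<in> L) (x # b))" and dH: "dec (filter (\<lambda>v. v \<in> H) (x # b))"
    unfolding Sh_def by auto
  have xb: "x \<notin> set b" using d by simp
  have sb: "set b = (L \<union> H) - {x}" using st xb by auto
  have xLH: "x \<in> L \<union> H" using st by auto
  show "(L \<noteq> {} \<and> x = Max L \<and> b \<in> Sh (L - {x}) H) \<or> (H \<noteq> {} \<and> x = Max H \<and> b \<in> Sh L (H - {x}))"
  proof (cases "x \<in> L")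
    case True
    then have xH: "x \<notin> H" using dis by auto
    have lt: "\<forall>v\<in>set (filter (\<lambda>v. v \<in> L) b). v < x" using dL True by simp
    then have "\<forall>v\<in>L - {x}. v < x" using sb by auto
    then have "\<forall>v\<in>L. v \<le> x" by (metis Diff_iff le_less singletonD)
    then have mx: "x = Max L" using True fin(1) by (intro Max_eqI[symmetric]) auto
    have f1: "filter (\<lambda>v. v \<in> L - {x}) b = filter (\<lambda>v. v \<in> L) b"
      using xb by (intro filter_cong) auto
    have "b \<in> Sh (L - {x}) H"
      unfolding Sh_def using d sb xH dL dH True f1 by auto
    then show ?thesis using mx True by auto
  next
    case False
    then have xH: "x \<in> H" using xLH by auto
    have lt: "\<forall>v\<in>set (filter (\<lambda>v. v \<in> H) b). v < x" using dH xH by simp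
    then have "\<forall>v\<in>H - {x}. v < x" using sb by auto
    then have "\<forall>v\<in>H. v \<le> x" by (metis Diff_iff le_less singletonD)
    then have mx: "x = Max H" using xH fin(2) by (intro Max_eqI[symmetric]) auto
    have f1: "filter (\<lambda>v. v \<in> H - {x}) b = filter (\<lambda>v. v \<in> H) b"
      using xb by (intro filter_cong) auto
    have "b \<in> Sh L (H - {x})"
      unfolding Sh_def using d sb False dL dH xH f1 by auto
    then show ?thesis using mx xH by auto
  qed
next
  assume "(L \<noteq> {} \<and> x = Max L \<and> b \<in> Sh (L - {x}) H) \<or> (H \<noteq> {} \<and> x = Max H \<and> b \<in> Sh L (H - {x}))"
  then show "x # b \<in> Sh L H"
  proof
    assume h: "L \<noteq> {} \<and> x = Max L \<and> b \<in> Sh (L - {x}) H"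
    then have xL: "x \<in> L" using fin by auto
    then have xH: "x \<notin> H" using dis by auto
    have d: "distinct b" and sb: "set b = (L - {x}) \<union> H"
      and dL: "dec (filter (\<lambda>v. v \<in> L - {x}) b)" and dH: "dec (filter (\<lambda>v. v \<in> H) b)"
      using h unfolding Sh_def by auto
    have xb: "x \<notin> set b" using sb xH by auto
    have f1: "filter (\<lambda>v. v \<in> L - {x}) b = filter (\<lambda>v. v \<in> L) b"
      using xb by (intro filter_cong) auto
    have lt: "\<forall>v\<in>L - {x}. v < x" using h fin(1)
      by (metis Diff_iff Max_ge le_neq_implies_less singletonI)
    have "\<forall>v\<in>set (filter (\<lambda>v. v \<in> L) b). v < x" using lt xb by auto
    then have "dec (filter (\<lambda>v. v \<in> L) (x # b))" using dL f1 xL by simp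
    moreover have "dec (filter (\<lambda>v. v \<in> H) (x # b))" using dH xH by simp
    ultimately show ?thesis unfolding Sh_def using d xb sb xL by auto
  next
    assume h: "H \<noteq> {} \<and> x = Max H \<and> b \<in> Sh L (H - {x})"
    then have xH: "x \<in> H" using fin by auto
    then have xL: "x \<notin> L" using dis by auto
    have d: "distinct b" and sb: "set b = L \<union> (H - {x})"
      and dL: "dec (filter (\<lambda>v. v \<in> L) b)" and dH: "dec (filter (\<lambda>v. v \<in> H - {x}) b)"
      using h unfolding Sh_def by auto
    have xb: "x \<notin> set b" using sb xL by auto
    have f1: "filter (\<lambda>v. v \<in> H - {x}) b = filter (\<lambda>v. v \<in> H) b"
      using xb by (intro filter_cong) auto
    have lt: "\<forall>v\<in>H - {x}. v < x" using h fin(2)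
      by (metis Diff_iff Max_ge le_neq_implies_less singletonI)
    have "\<forall>v\<in>set (filter (\<lambda>v. v \<in> H) b). v < x" using lt xb by auto
    then have "dec (filter (\<lambda>v. v \<in> H) (x # b))" using dH f1 xH by simp
    moreover have "dec (filter (\<lambda>v. v \<in> L) (x # b))" using dL xL by simp
    ultimately show ?thesis unfolding Sh_def using d xb sb xH by auto
  qed
qed

lemma Sh_split:
  assumes fin: "finite L" "finite H" and dis: "L \<inter> H = {}" and ne: "L \<union> H \<noteq> {}"
  shows "Sh L H = Cons (Max L) ` (if L = {} then {} else Sh (L - {Max L}) H)
                 \<union> Cons (Max H) ` (if H = {} then {} else Sh L (H - {Max H}))"
proof (rule set_eqI)
  fix b
  show "b \<in> Sh L H \<longleftrightarrow> b \<in> Cons (Max L) ` (if L = {} then {} else Sh (L - {Max L}) H)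
                 \<union> Cons (Max H) ` (if H = {} then {} else Sh L (H - {Max H}))"
  proof (cases b)
    case Nil
    then show ?thesis using Sh_Nil ne by auto
  next
    case (Cons x b')
    show ?thesis unfolding Cons Sh_Cons[OF fin dis] by auto
  qed
qed

lemma Sh_card:
  "finite L \<Longrightarrow> finite H \<Longrightarrow> L \<inter> H = {} \<Longrightarrow> card (Sh L H) = (card L + card H) choose card L"
proof (induction "card L + card H" arbitrary: L H rule: less_induct)
  case less
  note fin = less.prems(1,2) and dis = less.prems(3)
  show ?case
  proof (cases "L \<union> H = {}")
    case True
    then have "Sh L H = {[]}" unfolding Sh_def by auto
    then show ?thesis using True by simp
  next
    case ne: False
    have injC: "inj_on (Cons x) A" for x :: nat and A by (rule inj_onI) simp
    show ?thesis
    proof (cases "L = {}")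
      case L0: True
      then have H0: "H \<noteq> {}" using ne by simp
      have "Sh L H = Cons (Max H) ` Sh L (H - {Max H})" using Sh_split[OF fin dis ne] L0 H0 by simp
      then have "card (Sh L H) = card (Sh L (H - {Max H}))" using card_image injC by metis
      also have "\<dots> = (card L + card (H - {Max H})) choose card L"
      proof (rule less.hyps)
        show "card L + card (H - {Max H}) < card L + card H" using fin H0 by (simp add: card_gt_0_iff)
      qed (use fin dis in auto)
      finally show ?thesis using L0 by simp
    next
      case L1: False
      show ?thesis
      proof (cases "H = {}")
        case H0: True
        have "Sh L H = Cons (Max L) ` Sh (L - {Max L}) H" using Sh_split[OF fin dis ne] L1 H0 by simp
        then have "card (Sh L H) = card (Sh (L - {Max L}) H)" using card_image injC by metis
        also have "\<dots> = (card (L - {Max L}) + card H) choose card (L - {Max L})"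
        proof (rule less.hyps)
          show "card (L - {Max L}) + card H < card L + card H" using fin L1 by (simp add: card_gt_0_iff)
        qed (use fin dis in auto)
        finally show ?thesis using H0 by simp
      next
        case H1: False
        have mL: "Max L \<in> L" and mH: "Max H \<in> H" using fin L1 H1 by auto
        have neq: "Max L \<noteq> Max H" using mL mH dis by auto
        have eq: "Sh L H = Cons (Max L) ` Sh (L - {Max L}) H \<union> Cons (Max H) ` Sh L (H - {Max H})"
          using Sh_split[OF fin dis ne] L1 H1 by simp
        have disj: "Cons (Max L) ` Sh (L - {Max L}) H \<inter> Cons (Max H) ` Sh L (H - {Max H}) = {}"
          using neq by auto
        have f1: "finite (Cons (Max L) ` Sh (L - {Max L}) H)" using Sh_finite fin by auto
        have f2: "finite (Cons (Max H) ` Sh L (H - {Max H}))" using Sh_finite fin by auto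
        have cL: "card L = Suc (card (L - {Max L}))" using card_Suc_Diff1[OF fin(1) mL] by simp
        have cH: "card H = Suc (card (H - {Max H}))" using card_Suc_Diff1[OF fin(2) mH] by simp
        have c1: "card (Sh (L - {Max L}) H) = (card (L - {Max L}) + card H) choose card (L - {Max L})"
          by (rule less.hyps) (use fin dis cL in auto)
        have c2: "card (Sh L (H - {Max H})) = (card L + card (H - {Max H})) choose card L"
          by (rule less.hyps) (use fin dis cH in auto)
        have "card (Sh L H) = card (Sh (L - {Max L}) H) + card (Sh L (H - {Max H}))"
          unfolding eq using card_Un_disjoint[OF f1 f2 disj] card_image injC by metis
        also have "\<dots> = (card L + card H) choose card L"
          unfolding c1 c2 using cL cH by simp
        finally show ?thesis .
      qed
    qed
  qed
qed

lemma Sh_nondec_card: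
  assumes "finite L" "finite H" "L \<inter> H = {}"
  shows "card (Sh L H - {b. dec b}) + 1 = (card L + card H) choose card L"
proof -
  have "Sh L H \<inter> {b. dec b} = {decl (L \<union> H)}"
  proof (rule set_eqI, rule iffI)
    fix b assume "b \<in> Sh L H \<inter> {b. dec b}"
    then have "dec b" "set b = L \<union> H" unfolding Sh_def by auto
    then show "b \<in> {decl (L \<union> H)}" using dec_unique by auto
  next
    fix b assume "b \<in> {decl (L \<union> H)}"
    then have b: "b = decl (L \<union> H)" by simp
    have "dec b" "set b = L \<union> H" "distinct b" unfolding b using decl_props assms by auto
    then show "b \<in> Sh L H \<inter> {b. dec b}" unfolding Sh_def by (auto intro: sorted_wrt_filter)
  qed
  then have "Sh L H - {b. dec b} = Sh L H - {decl (L \<union> H)}" by blast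
  moreover have "decl (L \<union> H) \<in> Sh L H" using \<open>Sh L H \<inter> {b. dec b} = _\<close> by blast
  moreover have "card (Sh L H) > 0" using Sh_finite[OF assms(1,2)] \<open>decl (L \<union> H) \<in> Sh L H\<close>
    by (auto simp: card_gt_0_iff)
  ultimately have "card (Sh L H - {b. dec b}) + 1 = card (Sh L H)"
    using Sh_finite[OF assms(1,2)] by simp
  then show ?thesis using Sh_card[OF assms] by simp
qed

lemma app_cons_prefix:
  "m \<notin> set a \<Longrightarrow> m \<notin> set a' \<Longrightarrow> a @ m # b = a' @ m # b' \<Longrightarrow> a = a'"
proof (induction a arbitrary: a')
  case Nil then show ?case by (cases a') auto
next
  case (Cons x xs) then show ?case by (cases a') auto
qed

lemma Sd_eq:
  "Sd m = (\<lambda>A. decl A @ m # decl ({1..<m} - A)) ` (Pow {1..<m} - {{}})"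
proof (rule set_eqI, rule iffI)
  fix s assume "s \<in> Sd m"
  then obtain a b where s: "s = a @ m # b" and h: "a \<noteq> []" "dec a" "dec b" "set a \<union> set b = {1..<m}"
    "set a \<inter> set b = {}" unfolding Sd_def by blast
  have a: "a = decl (set a)" using dec_unique[OF h(2)] by simp
  have sb: "set b = {1..<m} - set a" using h(4,5) by auto
  have b: "b = decl ({1..<m} - set a)" using dec_unique[OF h(3) sb] .
  have "set a \<in> Pow {1..<m} - {{}}" using h(1,4) by auto
  moreover have "s = decl (set a) @ m # decl ({1..<m} - set a)" using s a b by metis
  ultimately show "s \<in> (\<lambda>A. decl A @ m # decl ({1..<m} - A)) ` (Pow {1..<m} - {{}})" by blast
next
  fix s assume "s \<in> (\<lambda>A. decl A @ m # decl ({1..<m} - A)) ` (Pow {1..<m} - {{}})"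
  then obtain A where A: "A \<subseteq> {1..<m}" "A \<noteq> {}" and s: "s = decl A @ m # decl ({1..<m} - A)" by auto
  have fA: "finite A" using A(1) finite_subset by blast
  have p1: "dec (decl A)" "set (decl A) = A" using decl_props[OF fA] by auto
  have p2: "dec (decl ({1..<m} - A))" "set (decl ({1..<m} - A)) = {1..<m} - A" using decl_props[of "{1..<m} - A"] by auto
  have "decl A \<noteq> []" using p1(2) A(2) by auto
  then show "s \<in> Sd m" unfolding Sd_def s using p1 p2 A(1) by blast
qed

lemma Sd_card: "card (Sd m) = 2 ^ (m - 1) - 1"
proof -
  have inj: "inj_on (\<lambda>A. decl A @ m # decl ({1..<m} - A)) (Pow {1..<m} - {{}})"
  proof (rule inj_onI)
    fix A B assume AB: "A \<in> Pow {1..<m} - {{}}" "B \<in> Pow {1..<m} - {{}}"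
      and eq: "decl A @ m # decl ({1..<m} - A) = decl B @ m # decl ({1..<m} - B)"
    have fA: "finite A" "finite B" using AB finite_subset by auto
    have sA: "set (decl A) = A" "set (decl B) = B" using decl_props fA by auto
    have "m \<notin> set (decl A)" "m \<notin> set (decl B)" using sA AB by auto
    then have "decl A = decl B" using eq app_cons_prefix by metis
    then show "A = B" using sA by metis
  qed
  have "card (Sd m) = card (Pow {1..<m} - {{}})" unfolding Sd_eq using card_image[OF inj] .
  also have "\<dots> = card (Pow {1..<m}) - 1" by (subst card_Diff_singleton) auto
  also have "\<dots> = 2 ^ (m - 1) - 1" by (simp add: card_Pow)
  finally show ?thesis .
qed

lemma Ssp_card:
  "card (Ssp m) = (\<Sum>q<m-1. \<Sum>l\<le>q. ((q choose l) - 1))"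
proof -
  define F where "F = (\<lambda>(q,l). (\<lambda>b. decl {l+1..<m-q+l} @ m # b) ` (Sh {1..l} {m-q+l..<m} - {b. dec b}))"
  define I where "I = Sigma {..<m-1} (\<lambda>q. {..q})"
  have Ssp: "Ssp m = \<Union> (F ` I)" unfolding Ssp_def F_def I_def by simp
  have finI: "finite I" unfolding I_def by auto
  have cardF: "card (F i) = (fst i choose snd i) - 1" and finF: "finite (F i)" if "i \<in> I" for i
  proof -
    obtain q l where i: "i = (q,l)" by (cases i)
    have ql: "q < m - 1" "l \<le> q" using that unfolding i I_def by auto
    have inj: "inj_on (\<lambda>b. decl {l+1..<m-q+l} @ m # b) X" for X by (rule inj_onI) simp
    have fin: "finite (Sh {1..l} {m-q+l..<m} - {b. dec b})" using Sh_finite by auto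
    have dis: "{1..l} \<inter> {m-q+l..<m} = {}" using ql by auto
    have c: "card {1..l} = l" "card {m-q+l..<m} = q - l" using ql by auto
    have "card (Sh {1..l} {m-q+l..<m} - {b. dec b}) + 1 = q choose l"
      using Sh_nondec_card[OF _ _ dis] c ql by simp
    then show "card (F i) = (fst i choose snd i) - 1"
      unfolding i F_def using card_image[OF inj] by simp
    show "finite (F i)" unfolding i F_def using fin by simp
  qed
  have disj: "F i \<inter> F j = {}" if "i \<in> I" "j \<in> I" "i \<noteq> j" for i j
  proof (rule ccontr)
    assume "F i \<inter> F j \<noteq> {}"
    obtain q l where i: "i = (q,l)" by (cases i)
    obtain q' l' where j: "j = (q',l')" by (cases j)
    have ql: "q < m - 1" "l \<le> q" "q' < m - 1" "l' \<le> q'" using that unfolding i j I_def by auto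
    from \<open>F i \<inter> F j \<noteq> {}\<close> obtain b b' where
      eq: "decl {l+1..<m-q+l} @ m # b = decl {l'+1..<m-q'+l'} @ m # b'"
      unfolding F_def i j by auto
    have s1: "set (decl {l+1..<m-q+l}) = {l+1..<m-q+l}" "set (decl {l'+1..<m-q'+l'}) = {l'+1..<m-q'+l'}"
      using decl_props by auto
    have "m \<notin> set (decl {l+1..<m-q+l})" "m \<notin> set (decl {l'+1..<m-q'+l'})" using s1 ql by auto
    then have "decl {l+1..<m-q+l} = decl {l'+1..<m-q'+l'}" using eq app_cons_prefix by metis
    then have "{l+1..<m-q+l} = {l'+1..<m-q'+l'}" using s1 by metis
    moreover have "l+1 < m-q+l" "l'+1 < m-q'+l'" using ql by auto
    ultimately have "l + 1 = l' + 1" "m-q+l = m-q'+l'" using atLeastLessThan_inj by blast+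
    then have "l = l'" "q = q'" using ql by auto
    then show False using that(3) unfolding i j by simp
  qed
  have "card (Ssp m) = (\<Sum>i\<in>I. card (F i))"
    unfolding Ssp by (rule card_UN_disjoint[OF finI]) (use finF disj in auto)
  also have "\<dots> = (\<Sum>i\<in>I. (fst i choose snd i) - 1)" using cardF by (rule sum.cong[OF refl])
  also have "\<dots> = (\<Sum>q<m-1. \<Sum>l\<le>q. ((q choose l) - 1))"
    unfolding I_def by (subst sum.Sigma) (auto simp: split_beta)
  finally show ?thesis .
qed

lemma Av_finite: "finite (Av m)"
proof -
  have "Av m \<subseteq> {s. set s \<subseteq> {1..m} \<and> length s = m}"
    unfolding Av_def by (auto dest: distinct_card)
  moreover have "finite {s. set s \<subseteq> {1..m} \<and> length s = m}" by (rule finite_lists_length_eq) simp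
  ultimately show ?thesis by (rule finite_subset)
qed

lemma Av_eq:
  assumes "m \<ge> 1"
  shows "Av m = Cons m ` Av (m-1) \<union> Sd m \<union> Ssp m"
  using av_struct_sub[OF assms] av_cons[OF assms] av_Sd av_Ssp by blast

lemma not_cons_img:
  assumes "a \<noteq> []" "m \<notin> set a"
  shows "a @ m # b \<notin> Cons m ` X"
proof
  assume "a @ m # b \<in> Cons m ` X"
  then have "hd (a @ m # b) = m" by auto
  then have "hd a = m" using assms(1) by simp
  then show False using assms by (cases a) auto
qed

lemma Av_card_rec:
  assumes m: "m \<ge> 1"
  shows "card (Av m) = card (Av (m-1)) + card (Sd m) + card (Ssp m)"
proof -
  have f0: "finite (Cons m ` Av (m-1))" using Av_finite by simp
  have f1: "finite (Sd m)" by (rule finite_subset[OF _ Av_finite]) (use av_Sd in blast)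
  have f2: "finite (Ssp m)" by (rule finite_subset[OF _ Av_finite]) (use av_Ssp in blast)
  have d1: "Cons m ` Av (m-1) \<inter> Sd m = {}"
  proof -
    have "s \<notin> Cons m ` Av (m-1)" if sd: "s \<in> Sd m" for s
    proof -
      obtain a b where s: "s = a @ m # b" and h: "a \<noteq> []" "set a \<union> set b = {1..<m}"
        using sd unfolding Sd_def by blast
      have "m \<notin> set a" using h(2) by auto
      then show ?thesis unfolding s by (rule not_cons_img[OF h(1)])
    qed
    then show ?thesis by blast
  qed
  have d2: "(Cons m ` Av (m-1) \<union> Sd m) \<inter> Ssp m = {}"
  proof -
    have "s \<notin> Cons m ` Av (m-1) \<and> s \<notin> Sd m" if sp: "s \<in> Ssp m" for s
    proof -
      obtain q l b where ql: "q < m - 1" "l \<le> q" and bS: "b \<in> Sh {1..l} {m-q+l..<m}" and nd: "\<not> dec b"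
        and s: "s = decl {l+1..<m-q+l} @ m # b"
        using sp unfolding Ssp_def by auto
      have sa: "set (decl {l+1..<m-q+l}) = {l+1..<m-q+l}" using decl_props by auto
      have "l+1 < m-q+l" using ql by auto
      then have "{l+1..<m-q+l} \<noteq> {}" by simp
      then have ne: "decl {l+1..<m-q+l} \<noteq> []" using sa by auto
      have nm: "m \<notin> set (decl {l+1..<m-q+l})" using sa ql by auto
      have c1: "s \<notin> Cons m ` Av (m-1)" unfolding s by (rule not_cons_img[OF ne nm])
      have c2: "s \<notin> Sd m"
      proof
        assume "s \<in> Sd m"
        then obtain a b' where s2: "s = a @ m # b'" and h: "dec b'" "set a \<union> set b' = {1..<m}"
          unfolding Sd_def by blast
        have "m \<notin> set a" using h(2) by auto
        have eqs: "a @ m # b' = decl {l+1..<m-q+l} @ m # b" using s s2 by (simp only:)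
        have "a = decl {l+1..<m-q+l}" by (rule app_cons_prefix[OF \<open>m \<notin> set a\<close> nm eqs])
        then have "b = b'" using s s2 by simp
        then show False using nd h(1) by simp
      qed
      show ?thesis using c1 c2 by blast
    qed
    then show ?thesis by blast
  qed
  have "card (Av m) = card (Cons m ` Av (m-1) \<union> Sd m) + card (Ssp m)"
    unfolding Av_eq[OF m] by (rule card_Un_disjoint) (use f0 f1 f2 d2 in auto)
  also have "card (Cons m ` Av (m-1) \<union> Sd m) = card (Cons m ` Av (m-1)) + card (Sd m)"
    by (rule card_Un_disjoint) (use f0 f1 d1 in auto)
  also have "card (Cons m ` Av (m-1)) = card (Av (m-1))"
    by (rule card_image) (rule inj_onI, simp)
  finally show ?thesis .
qed

lemma sum_choose_minus: "(\<Sum>l\<le>q. ((q choose l) - 1)) + (q + 1) = 2 ^ q"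
proof -
  have "(\<Sum>l\<le>q. ((q choose l) - 1 + 1)) = (\<Sum>l\<le>q. ((q choose l) - 1)) + (\<Sum>l\<le>q. (1::nat))"
    by (rule sum.distrib)
  then have "(\<Sum>l\<le>q. ((q choose l) - 1)) + (q + 1) = (\<Sum>l\<le>q. ((q choose l) - 1 + 1))"
    by simp
  also have "\<dots> = (\<Sum>l\<le>q. (q choose l))"
    by (rule sum.cong) (auto simp: Suc_leI zero_less_binomial)
  also have "\<dots> = 2 ^ q" by (rule choose_row_sum)
  finally show ?thesis .
qed

lemma S_closed:
  "2 * int (\<Sum>q<k. \<Sum>l\<le>q. ((q choose l) - 1)) = 2 ^ (k+1) - 2 - int k * (int k + 1)"
proof (induction k)
  case 0 then show ?case by simp
next
  case (Suc k)
  have e: "int (\<Sum>l\<le>k. ((k choose l) - 1)) = 2 ^ k - (int k + 1)"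
    using arg_cong[OF sum_choose_minus[of k], of int] by simp
  have "2 * int (\<Sum>q<Suc k. \<Sum>l\<le>q. ((q choose l) - 1))
      = 2 * int (\<Sum>q<k. \<Sum>l\<le>q. ((q choose l) - 1)) + 2 * int (\<Sum>l\<le>k. ((k choose l) - 1))"
    by simp
  also have "\<dots> = 2 ^ (k+1) - 2 - int k * (int k + 1) + 2 * (2 ^ k - (int k + 1))"
    using Suc.IH e by simp
  also have "\<dots> = 2 ^ (Suc k + 1) - 2 - int (Suc k) * (int (Suc k) + 1)"
    by (simp add: algebra_simps)
  finally show ?case .
qed

lemma choose2: "2 * int (n choose 2) = int n * (int n - 1)"
proof (induction n)
  case 0 then show ?case by simp
next
  case (Suc n)
  have "(Suc n choose 2) = (n choose 1) + (n choose 2)"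
    using binomial_Suc_Suc[of n 1] by (simp add: numeral_2_eq_2)
  then have "2 * int (Suc n choose 2) = 2 * int n + 2 * int (n choose 2)" by simp
  also have "\<dots> = int (Suc n) * (int (Suc n) - 1)" using Suc.IH by (simp add: algebra_simps)
  finally show ?case .
qed

lemma choose3: "(Suc n choose 3) = (n choose 2) + (n choose 3)"
  using binomial_Suc_Suc[of n 2] by (simp add: numeral_3_eq_3 numeral_2_eq_2)

lemma Av_card:
  "int (card (Av m)) = 2 ^ (m+1) + 1 - 2 * (int m + 1) - int ((m+1) choose 3)"
proof (induction m)
  case 0
  have "Av 0 = {[]}" unfolding Av_def c123_def c3412_def by auto
  then show ?case by simp
next
  case (Suc k)
  have r: "card (Av (Suc k)) = card (Av k) + card (Sd (Suc k)) + card (Ssp (Suc k))"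
    using Av_card_rec[of "Suc k"] by simp
  have sd: "int (card (Sd (Suc k))) = 2 ^ k - 1"
    using Sd_card[of "Suc k"] by (simp add: of_nat_diff)
  have sp: "2 * int (card (Ssp (Suc k))) = 2 ^ (k+1) - 2 - int k * (int k + 1)"
    using Ssp_card[of "Suc k"] S_closed[of k] by simp
  have c3: "int ((Suc k + 1) choose 3) = int ((k+1) choose 3) + int ((k+1) choose 2)"
    using choose3[of "k+1"] by simp
  have c2: "2 * int ((k+1) choose 2) = (int k + 1) * int k" using choose2[of "k+1"] by simp
  have "2 * int (card (Av (Suc k))) = 2 * int (card (Av k)) + 2 * int (card (Sd (Suc k))) + 2 * int (card (Ssp (Suc k)))"
    using r by simp
  also have "\<dots> = 2 * (2 ^ (k+1) + 1 - 2 * (int k + 1) - int ((k+1) choose 3)) + 2 * (2 ^ k - 1)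
      + (2 ^ (k+1) - 2 - int k * (int k + 1))"
    using Suc.IH sd sp by simp
  also have "\<dots> = 2 * (2 ^ (Suc k + 1) + 1 - 2 * (int (Suc k) + 1) - int ((Suc k + 1) choose 3))"
    using c3 c2 by (simp add: algebra_simps)
  finally show ?case by simp
qed

lemma circ_set_eq:
  assumes n: "n \<ge> 1"
  shows "{\<pi> \<in> circ_perms n. circ_avoids [1,2,3,4] \<pi>} = (\<lambda>s. s @ [n]) ` Av (n-1)"
proof (rule set_eqI, rule iffI)
  fix p assume "p \<in> {\<pi> \<in> circ_perms n. circ_avoids [1,2,3,4] \<pi>}"
  then have d: "distinct p" and sp: "set p = {1..n}" and lp: "last p = n" and av: "\<not> circ_occurs [1,2,3,4] p"
    unfolding circ_perms_def circ_avoids_def by auto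
  have pne: "p \<noteq> []" using sp n by auto
  define s where "s = butlast p"
  have p: "p = s @ [n]" unfolding s_def using pne lp by (metis append_butlast_last_id)
  have ds: "distinct s" and ns: "n \<notin> set s" using d unfolding p by auto
  have ss: "set s = {1..n-1}"
  proof -
    have "set s \<union> {n} = {1..n}" using sp unfolding p by auto
    then have "set s = {1..n} - {n}" using ns by blast
    also have "\<dots> = {1..n-1}" using n by auto
    finally show ?thesis .
  qed
  have lt: "\<forall>x\<in>set s. x < n" using ss n by auto
  have "\<not> (c123 s \<or> c3412 s)" using av unfolding circ_occ_iff p rot_reduce[OF lt] .
  then have "s \<in> Av (n-1)" unfolding Av_def using ds ss by auto
  then show "p \<in> (\<lambda>s. s @ [n]) ` Av (n-1)" unfolding p by blast
next
  fix p assume "p \<in> (\<lambda>s. s @ [n]) ` Av (n-1)"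
  then obtain s where p: "p = s @ [n]" and sA: "s \<in> Av (n-1)" by blast
  have ds: "distinct s" and ss: "set s = {1..n-1}" and na: "\<not> c123 s" "\<not> c3412 s"
    using sA unfolding Av_def by auto
  have lt: "\<forall>x\<in>set s. x < n" using ss n by auto
  have "distinct p" using ds lt unfolding p by auto
  moreover have "set p = {1..n}" unfolding p using ss n by auto
  moreover have "last p = n" unfolding p by simp
  moreover have "\<not> circ_occurs [1,2,3,4] p" unfolding circ_occ_iff p rot_reduce[OF lt] using na by blast
  ultimately show "p \<in> {\<pi> \<in> circ_perms n. circ_avoids [1,2,3,4] \<pi>}"
    unfolding circ_perms_def circ_avoids_def by auto
qed

theorem theorem3:
  fixes n :: nat
  assumes "n \<ge> 1"
  shows "int (card {\<pi> \<in> circ_perms n. circ_avoids [1,2,3,4] \<pi>})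
           = 2 ^ n + 1 - 2 * int n - int (n choose 3)"
proof -
  have "card {\<pi> \<in> circ_perms n. circ_avoids [1,2,3,4] \<pi>} = card (Av (n-1))"
    unfolding circ_set_eq[OF assms] by (rule card_image) (rule inj_onI, simp)
  moreover have "int (card (Av (n-1))) = 2 ^ n + 1 - 2 * int n - int (n choose 3)"
    using Av_card[of "n-1"] assms by simp
  ultimately show ?thesis by simp
qed

end
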